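(* Let $n\ge 2$, $p\ge 2$, $\kappa\in\{0,1\}$ and $f^0,f^1\in\mathbb{R}^n$ with $f^0,f^1\ge 0$ and $\|f^0\|_1=\|f^1\|_1$. Consider the problem $$\min_{m\in\mathbb{R}^{(n-\kappa)p},\ f\in\mathbb{R}^{n(p-1)}} \|J(S_M m,\ S_F f+f_b^{+})\|_1 \quad\text{subject to}\quad D_M m+D_F f=f_b^{-}$$ (with $S_M,D_M,S_F,D_F,f_b^{\pm},J$ as in the context). If $(m_1,f_1)$ and $(m_2,f_2)$ are two minimizers, then $$\frac{(S_M m_1)_i}{(S_F f_1+f_b^{+})_i}=\frac{(S_M m_2)_i}{(S_F f_2+f_b^{+})_i}$$ for every index $i$ at which both denominators $(S_F f_1+f_b^{+})_i$ and $(S_F f_2+f_b^{+})_i$ are positive.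
   Context: Vectors $f\in\mathbb{R}^{n(p-1)}$, $m\in\mathbb{R}^{(n-\kappa)p}$ are discrete density and momentum reordered columnwise (time index outer); $\kappa=1$ is the Neumann and $\kappa=0$ the periodic spatial boundary case. $\otimes$ is the Kronecker product. Matrices: $S_p\in\mathbb{R}^{p-1,p}$ has $j$-th row $\tfrac12(e_j+e_{j+1})^{T}$; $D_p\in\mathbb{R}^{p-1,p}$ has $j$-th row $p(-e_j+e_{j+1})^{T}$. $S_n,D_n\in\mathbb{R}^{n-1,n}$ have $j$-th rows $\tfrac12(e_j+e_{j+1})^{T}$ and $n(-e_j+e_{j+1})^{T}$. $S_{n,per}\in\mathbb{R}^{n,n}$ has first row $\tfrac12(e_1+e_n)^T$ and $j$-th row $\tfrac12(e_{j-1}+e_j)^T$ ($j\ge2$); $D_{n,per}\in\mathbb{R}^{n,n}$ has first row $n(-e_1+e_n)^T$ and $j$-th row $n(e_{j-1}-e_j)^T$ ($j\ge 2$). $S_F:=S_p^{T}\otimes I_n$, $D_F:=-D_p^{T}\otimes I_n$; $S_M:=I_p\otimes S_n^{T}$, $D_M:=I_p\otimes(-D_n^{T})$ if $\kappa=1$, and $S_M:=I_p\otimes S_{n,per}^{T}$, $D_M:=I_p\otimes D_{n,per}^{T}$ if $\kappa=0$. $f_b^{+}:=\tfrac12((f^0)^T,0_{n(p-2)}^T,(f^1)^T)^T$, $f_b^{-}:=p((f^0)^T,0_{n(p-2)}^T,-(f^1)^T)^T$, both in $\mathbb{R}^{np}$. $J$ acts componentwise: $J(u,v)_i=u_i^2/(2v_i)$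 if $v_i>0$, $0$ if $(u_i,v_i)=(0,0)$, $+\infty$ otherwise, and $\|J(u,v)\|_1=\sum_i J(u,v)_i$. *)

theory Defs
  imports Complex_Main "HOL-Library.Extended_Real"
begin

text \<open>Matrices are functions nat => nat => real (0-based indices); dimensions are
  carried explicitly. Vectors are functions nat => real (0-based).\<close>

definition mtr :: "(nat \<Rightarrow> nat \<Rightarrow> real) \<Rightarrow> nat \<Rightarrow> nat \<Rightarrow> real" where
  "mtr A = (\<lambda>i j. A j i)"

definition idm :: "nat \<Rightarrow> nat \<Rightarrow> real" where
  "idm = (\<lambda>i j. if i = j then 1 else 0)"

text \<open>Kronecker product A (x) B, where B has r rows and c columns.\<close>
definition kron :: "(nat \<Rightarrow> nat \<Rightarrow> real) \<Rightarrow> nat \<Rightarrow> nat \<Rightarrow> (nat \<Rightarrow> nat \<Rightarrow> real) \<Rightarrow> nat \<Rightarrow> nat \<Rightarrow> real" where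
  "kron A r c B = (\<lambda>i j. A (i div r) (j div c) * B (i mod r) (j mod c))"

definition mvec :: "(nat \<Rightarrow> nat \<Rightarrow> real) \<Rightarrow> nat \<Rightarrow> (nat \<Rightarrow> real) \<Rightarrow> nat \<Rightarrow> real" where
  "mvec A c v = (\<lambda>i. \<Sum>j<c. A i j * v j)"

text \<open>S_p, D_p in R^{(p-1) x p}; S_n, D_n in R^{(n-1) x n} (row j: e_j, e_{j+1}, 0-based).\<close>
definition Savg :: "nat \<Rightarrow> nat \<Rightarrow> real" where
  "Savg = (\<lambda>j k. if k = j \<or> k = j + 1 then 1/2 else 0)"

definition Ddiff :: "nat \<Rightarrow> nat \<Rightarrow> nat \<Rightarrow> real" where
  "Ddiff q = (\<lambda>j k. if k = j then - real q else if k = j + 1 then real q else 0)"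

definition Sper :: "nat \<Rightarrow> nat \<Rightarrow> nat \<Rightarrow> real" where
  "Sper n = (\<lambda>j k. if j = 0 then (if k = 0 \<or> k = n - 1 then 1/2 else 0)
                    else (if k = j - 1 \<or> k = j then 1/2 else 0))"

definition Dper :: "nat \<Rightarrow> nat \<Rightarrow> nat \<Rightarrow> real" where
  "Dper n = (\<lambda>j k. if j = 0 then (if k = 0 then - real n else if k = n - 1 then real n else 0)
                    else (if k = j - 1 then real n else if k = j then - real n else 0))"

definition SF :: "nat \<Rightarrow> nat \<Rightarrow> nat \<Rightarrow> nat \<Rightarrow> real" where
  "SF n p = kron (mtr Savg) n n idm"

definition DF :: "nat \<Rightarrow> nat \<Rightarrow> nat \<Rightarrow> nat \<Rightarrow> real" where
  "DF n p = (\<lambda>i j. - kron (mtr (Ddiff p)) n n idm i j)"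

definition SM :: "nat \<Rightarrow> nat \<Rightarrow> nat \<Rightarrow> nat \<Rightarrow> nat \<Rightarrow> real" where
  "SM \<kappa> n p = (if \<kappa> = 1 then kron idm n (n - 1) (mtr Savg)
                else kron idm n n (mtr (Sper n)))"

definition DM :: "nat \<Rightarrow> nat \<Rightarrow> nat \<Rightarrow> nat \<Rightarrow> nat \<Rightarrow> real" where
  "DM \<kappa> n p = (if \<kappa> = 1 then kron idm n (n - 1) (\<lambda>i j. - mtr (Ddiff n) i j)
                else kron idm n n (mtr (Dper n)))"

definition fbp :: "nat \<Rightarrow> nat \<Rightarrow> (nat \<Rightarrow> real) \<Rightarrow> (nat \<Rightarrow> real) \<Rightarrow> nat \<Rightarrow> real" where
  "fbp n p f0 f1 = (\<lambda>i. if i < n then f0 i / 2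
                      else if n * (p - 1) \<le> i \<and> i < n * p then f1 (i - n * (p - 1)) / 2
                      else 0)"

definition fbm :: "nat \<Rightarrow> nat \<Rightarrow> (nat \<Rightarrow> real) \<Rightarrow> (nat \<Rightarrow> real) \<Rightarrow> nat \<Rightarrow> real" where
  "fbm n p f0 f1 = (\<lambda>i. if i < n then real p * f0 i
                      else if n * (p - 1) \<le> i \<and> i < n * p then - real p * f1 (i - n * (p - 1))
                      else 0)"

definition Jc :: "real \<Rightarrow> real \<Rightarrow> ereal" where
  "Jc u v = (if v > 0 then ereal (u^2 / (2 * v)) else if u = 0 \<and> v = 0 then 0 else \<infinity>)"

definition objective :: "nat \<Rightarrow> nat \<Rightarrow> nat \<Rightarrow> (nat \<Rightarrow> real) \<Rightarrow> (nat \<Rightarrow> real)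
    \<Rightarrow> (nat \<Rightarrow> real) \<Rightarrow> (nat \<Rightarrow> real) \<Rightarrow> ereal" where
  "objective \<kappa> n p f0 f1 m f =
     (\<Sum>i<n * p. Jc (mvec (SM \<kappa> n p) ((n - \<kappa>) * p) m i)
                    (mvec (SF n p) (n * (p - 1)) f i + fbp n p f0 f1 i))"

definition feasible :: "nat \<Rightarrow> nat \<Rightarrow> nat \<Rightarrow> (nat \<Rightarrow> real) \<Rightarrow> (nat \<Rightarrow> real)
    \<Rightarrow> (nat \<Rightarrow> real) \<Rightarrow> (nat \<Rightarrow> real) \<Rightarrow> bool" where
  "feasible \<kappa> n p f0 f1 m f \<longleftrightarrow>
     (\<forall>i<n * p. mvec (DM \<kappa> n p) ((n - \<kappa>) * p) m i + mvec (DF n p) (n * (p - 1)) f i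
                = fbm n p f0 f1 i)"

definition is_minimizer :: "nat \<Rightarrow> nat \<Rightarrow> nat \<Rightarrow> (nat \<Rightarrow> real) \<Rightarrow> (nat \<Rightarrow> real)
    \<Rightarrow> (nat \<Rightarrow> real) \<Rightarrow> (nat \<Rightarrow> real) \<Rightarrow> bool" where
  "is_minimizer \<kappa> n p f0 f1 m f \<longleftrightarrow>
     feasible \<kappa> n p f0 f1 m f \<and>
     (\<forall>m' f'. feasible \<kappa> n p f0 f1 m' f' \<longrightarrow> objective \<kappa> n p f0 f1 m f \<le> objective \<kappa> n p f0 f1 m' f')"

end

theory Submission
  imports Defs
begin


definition okp :: "real \<Rightarrow> real \<Rightarrow> bool" where
  "okp u v \<longleftrightarrow> v > 0 \<or> (u = 0 \<and> v = 0)"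
definition Jr :: "real \<Rightarrow> real \<Rightarrow> real" where
  "Jr u v = (if v > 0 then u^2 / (2*v) else 0)"

lemma Jc_ok: "okp u v \<Longrightarrow> Jc u v = ereal (Jr u v)"
  by (auto simp: okp_def Jc_def Jr_def)
lemma Jc_nok: "\<not> okp u v \<Longrightarrow> Jc u v = \<infinity>"
  by (auto simp: okp_def Jc_def Jr_def)
lemma Jc_ge0: "Jc u v \<ge> 0"
  by (auto simp: Jc_def)

lemma ok_mid: "okp u1 v1 \<Longrightarrow> okp u2 v2 \<Longrightarrow> okp ((u1+u2)/2) ((v1+v2)/2)"
  by (auto simp: okp_def)

lemma quad_ineq:
  fixes u1 u2 v1 v2 :: real
  assumes "v1 > 0" "v2 > 0"
  shows "u1^2/v1 + u2^2/v2 - (u1+u2)^2/(v1+v2) = (u1*v2 - u2*v1)^2/(v1*v2*(v1+v2))"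
  using assms by (simp add: field_simps power2_eq_square)

lemma Jr_mid: "okp u1 v1 \<Longrightarrow> okp u2 v2 \<Longrightarrow> Jr ((u1+u2)/2) ((v1+v2)/2) \<le> (Jr u1 v1 + Jr u2 v2)/2"
proof -
  assume a: "okp u1 v1" "okp u2 v2"
  show ?thesis
  proof (cases "v1 > 0 \<and> v2 > 0")
    case True
    have "(u1*v2 - u2*v1)^2/(v1*v2*(v1+v2)) \<ge> 0" using True by simp
    hence "(u1+u2)^2/(v1+v2) \<le> u1^2/v1 + u2^2/v2" using quad_ineq[of v1 v2 u1 u2] True by linarith
    hence "((u1+u2)^2/(v1+v2))/4 \<le> (u1^2/v1 + u2^2/v2)/4" by (rule divide_right_mono) auto
    moreover have "Jr ((u1+u2)/2) ((v1+v2)/2) = ((u1+u2)^2/(v1+v2))/4" using True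
      by (simp add: Jr_def power_divide)
    moreover have "(Jr u1 v1 + Jr u2 v2)/2 = (u1^2/v1 + u2^2/v2)/4" using True
      by (simp add: Jr_def field_simps)
    ultimately show ?thesis by linarith
  next
    case False
    then show ?thesis using a by (auto simp: okp_def Jr_def power_divide field_simps)
  qed
qed

lemma Jr_mid_strict: "v1 > 0 \<Longrightarrow> v2 > 0 \<Longrightarrow> u1/v1 \<noteq> u2/v2 \<Longrightarrow>
   Jr ((u1+u2)/2) ((v1+v2)/2) < (Jr u1 v1 + Jr u2 v2)/2"
proof -
  assume True: "v1 > 0" "v2 > 0" and ne: "u1/v1 \<noteq> u2/v2"
  have "u1*v2 - u2*v1 \<noteq> 0" using ne True by (auto simp: field_simps)
  hence "(u1*v2 - u2*v1)^2/(v1*v2*(v1+v2)) > 0" using True by simp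
    hence "(u1+u2)^2/(v1+v2) < u1^2/v1 + u2^2/v2" using quad_ineq[of v1 v2 u1 u2] True by linarith
    hence "((u1+u2)^2/(v1+v2))/4 < (u1^2/v1 + u2^2/v2)/4" by (rule divide_strict_right_mono) auto
    moreover have "Jr ((u1+u2)/2) ((v1+v2)/2) = ((u1+u2)^2/(v1+v2))/4" using True
      by (simp add: Jr_def power_divide)
    moreover have "(Jr u1 v1 + Jr u2 v2)/2 = (u1^2/v1 + u2^2/v2)/4" using True
      by (simp add: Jr_def field_simps)
    ultimately show ?thesis by linarith
qed

lemma mvec_mid: "mvec A c (\<lambda>j. (v j + w j)/2) i = (mvec A c v i + mvec A c w i)/2"
  by (simp add: mvec_def sum_divide_distrib[symmetric] sum.distrib[symmetric] algebra_simps)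

lemma obj_fin:
  assumes "objective \<kappa> n p f0 f1 m f \<noteq> \<infinity>"
  shows "\<forall>i<n*p. okp (mvec (SM \<kappa> n p) ((n - \<kappa>) * p) m i) (mvec (SF n p) (n * (p - 1)) f i + fbp n p f0 f1 i)"
  using assms Jc_nok unfolding objective_def sum_Pinfty by auto

lemma obj_real:
  assumes "\<forall>i<n*p. okp (mvec (SM \<kappa> n p) ((n - \<kappa>) * p) m i) (mvec (SF n p) (n * (p - 1)) f i + fbp n p f0 f1 i)"
  shows "objective \<kappa> n p f0 f1 m f = ereal (\<Sum>i<n*p. Jr (mvec (SM \<kappa> n p) ((n - \<kappa>) * p) m i) (mvec (SF n p) (n * (p - 1)) f i + fbp n p f0 f1 i))"
  unfolding objective_def using assms by (simp add: Jc_ok)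

lemma main_conv:
  assumes ex: "feasible \<kappa> n p f0 f1 m0 g0" "objective \<kappa> n p f0 f1 m0 g0 \<noteq> \<infinity>"
    and min1: "is_minimizer \<kappa> n p f0 f1 m1 f1'"
    and min2: "is_minimizer \<kappa> n p f0 f1 m2 f2"
  shows "\<forall>i<n * p.
           mvec (SF n p) (n * (p - 1)) f1' i + fbp n p f0 f1 i > 0 \<and>
           mvec (SF n p) (n * (p - 1)) f2 i + fbp n p f0 f1 i > 0 \<longrightarrow>
           mvec (SM \<kappa> n p) ((n - \<kappa>) * p) m1 i / (mvec (SF n p) (n * (p - 1)) f1' i + fbp n p f0 f1 i)
         = mvec (SM \<kappa> n p) ((n - \<kappa>) * p) m2 i / (mvec (SF n p) (n * (p - 1)) f2 i + fbp n p f0 f1 i)"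
proof (rule ccontr)
  define U where "U = (\<lambda>m i. mvec (SM \<kappa> n p) ((n - \<kappa>) * p) m i)"
  define V where "V = (\<lambda>f i. mvec (SF n p) (n * (p - 1)) f i + fbp n p f0 f1 i)"
  define mm where "mm = (\<lambda>j. (m1 j + m2 j)/2)"
  define ff where "ff = (\<lambda>j. (f1' j + f2 j)/2)"
  assume "\<not> ?thesis"
  then obtain i0 where i0: "i0 < n*p" "V f1' i0 > 0" "V f2 i0 > 0" "U m1 i0 / V f1' i0 \<noteq> U m2 i0 / V f2 i0"
    unfolding U_def V_def by blast
  have f1: "feasible \<kappa> n p f0 f1 m1 f1'" and f2: "feasible \<kappa> n p f0 f1 m2 f2"
    using min1 min2 by (auto simp: is_minimizer_def)
  have fm: "feasible \<kappa> n p f0 f1 mm ff"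
    using f1 f2 unfolding feasible_def mm_def ff_def mvec_mid
    by (simp add: add_divide_distrib[symmetric]) (smt (verit, ccfv_SIG) field_sum_of_halves)
  have O1: "objective \<kappa> n p f0 f1 m1 f1' \<le> objective \<kappa> n p f0 f1 m0 g0"
    using min1 ex by (auto simp: is_minimizer_def)
  have O12: "objective \<kappa> n p f0 f1 m1 f1' = objective \<kappa> n p f0 f1 m2 f2"
    using min1 min2 f1 f2 unfolding is_minimizer_def by (meson order_antisym)
  have Om: "objective \<kappa> n p f0 f1 m1 f1' \<le> objective \<kappa> n p f0 f1 mm ff"
    using min1 fm by (auto simp: is_minimizer_def)
  have fin1: "objective \<kappa> n p f0 f1 m1 f1' \<noteq> \<infinity>" using O1 ex by auto
  have fin2: "objective \<kappa> n p f0 f1 m2 f2 \<noteq> \<infinity>" using O12 fin1 by auto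
  have ok1: "\<forall>i<n*p. okp (U m1 i) (V f1' i)" using obj_fin[OF fin1] unfolding U_def V_def .
  have ok2: "\<forall>i<n*p. okp (U m2 i) (V f2 i)" using obj_fin[OF fin2] unfolding U_def V_def .
  have Um: "U mm i = (U m1 i + U m2 i)/2" for i unfolding U_def mm_def mvec_mid ..
  have Vm: "V ff i = (V f1' i + V f2 i)/2" for i unfolding V_def ff_def mvec_mid by simp
  have okm: "\<forall>i<n*p. okp (U mm i) (V ff i)" unfolding Um Vm using ok1 ok2 ok_mid by blast
  have e1: "objective \<kappa> n p f0 f1 m1 f1' = ereal (\<Sum>i<n*p. Jr (U m1 i) (V f1' i))"
    using obj_real ok1 unfolding U_def V_def by blast
  have e2: "objective \<kappa> n p f0 f1 m2 f2 = ereal (\<Sum>i<n*p. Jr (U m2 i) (V f2 i))"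
    using obj_real ok2 unfolding U_def V_def by blast
  have em: "objective \<kappa> n p f0 f1 mm ff = ereal (\<Sum>i<n*p. Jr (U mm i) (V ff i))"
    using obj_real okm unfolding U_def V_def by blast
  have "(\<Sum>i<n*p. Jr (U mm i) (V ff i)) < (\<Sum>i<n*p. (Jr (U m1 i) (V f1' i) + Jr (U m2 i) (V f2 i))/2)"
  proof (rule sum_strict_mono_ex1)
    show "\<forall>i\<in>{..<n*p}. Jr (U mm i) (V ff i) \<le> (Jr (U m1 i) (V f1' i) + Jr (U m2 i) (V f2 i))/2"
      unfolding Um Vm using ok1 ok2 Jr_mid by blast
    show "\<exists>i\<in>{..<n*p}. Jr (U mm i) (V ff i) < (Jr (U m1 i) (V f1' i) + Jr (U m2 i) (V f2 i))/2"
      unfolding Um Vm using i0 Jr_mid_strict by blast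
  qed simp
  also have "\<dots> = ((\<Sum>i<n*p. Jr (U m1 i) (V f1' i)) + (\<Sum>i<n*p. Jr (U m2 i) (V f2 i)))/2"
    by (simp add: sum_divide_distrib[symmetric] sum.distrib)
  also have "\<dots> = (\<Sum>i<n*p. Jr (U m1 i) (V f1' i))" using e1 e2 O12 by simp
  finally show False using Om e1 em by simp
qed



lemma sum_split_mult: "(\<Sum>j<q*c. (g::nat\<Rightarrow>real) j) = (\<Sum>a<q. \<Sum>b<c. g (a*c+b))"
proof -
  have "(\<Sum>j<q*c. g j) = (\<Sum>a<q. sum g {a*c..<a*c+c})" using sum.nat_group[where g=g and n=q and k=c] by simp
  also have "\<dots> = (\<Sum>a<q. \<Sum>b<c. g (a*c+b))"
  proof (rule sum.cong[OF refl])
    fix a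
    show "sum g {a*c..<a*c+c} = (\<Sum>b<c. g (a*c+b))"
      using sum.shift_bounds_nat_ivl[of g 0 "a*c" c] by (simp add: atLeast0LessThan add.commute)
  qed
  finally show ?thesis .
qed

lemma mvec_kron: "mvec (kron A r c B) (q*c) v i = (\<Sum>a<q. \<Sum>b<c. A (i div r) a * B (i mod r) b * v (a*c+b))"
  unfolding mvec_def kron_def sum_split_mult
  by (intro sum.cong refl) auto

lemma mvec_neg: "mvec (\<lambda>i j. - A i j) c v i = - mvec A c v i"
  by (simp add: mvec_def sum_negf)

lemma sum_idm: "s < n \<Longrightarrow> (\<Sum>b<n. idm s b * (X::nat\<Rightarrow>real) b) = X s"
proof -
  assume "s < n"
  have "(\<Sum>b<n. idm s b * X b) = (\<Sum>b<n. if b = s then X s else 0)" by (intro sum.cong) (auto simp: idm_def)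
  thus ?thesis using \<open>s<n\<close> by simp
qed

lemma sum_idm': "s < n \<Longrightarrow> (\<Sum>b<n. (X::nat\<Rightarrow>real) b * idm s b) = X s"
proof -
  assume "s < n"
  have "(\<Sum>b<n. X b * idm s b) = (\<Sum>b<n. if b = s then X s else 0)" by (intro sum.cong) (auto simp: idm_def)
  thus ?thesis using \<open>s<n\<close> by simp
qed

lemma sum_two: "(\<Sum>a<(N::nat). (if a = K then (x::real) else 0) + (if a + 1 = K then y else 0)) =
   (if K < N then x else 0) + (if 1 \<le> K \<and> K - 1 < N then y else 0)"
proof -
  have "(\<Sum>a<N. (if a + 1 = K then y else 0)) = (\<Sum>a<N. (if a = K - 1 \<and> 1 \<le> K then y else 0))"
  proof (intro sum.cong refl)
    fix x :: nat
    have "(x + 1 = K) = (x = K - 1 \<and> 1 \<le> K)" by arith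
    thus "(if x + 1 = K then y else 0) = (if x = K - 1 \<and> 1 \<le> K then y else 0)" by simp
  qed
  also have "\<dots> = (if 1 \<le> K \<and> K - 1 < N then y else 0)"
    by (cases "1 \<le> K") auto
  finally show ?thesis by (simp add: sum.distrib)
qed

lemma sum_two': "(\<Sum>a<(N::nat). ((if a = K then (x::real) else 0) + (if a + 1 = K then y else 0)) * Z a) =
   (if K < N then x * Z K else 0) + (if 1 \<le> K \<and> K - 1 < N then y * Z (K - 1) else 0)"
proof -
  have "(\<Sum>a<N. (if a + 1 = K then y * Z a else 0)) = (\<Sum>a<N. (if a = K - 1 \<and> 1 \<le> K then y * Z (K - 1) else 0))"
  proof (intro sum.cong refl)
    fix x :: nat
    have "(x + 1 = K) = (x = K - 1 \<and> 1 \<le> K)" by arith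
    thus "(if x + 1 = K then y * Z x else 0) = (if x = K - 1 \<and> 1 \<le> K then y * Z (K - 1) else 0)" by auto
  qed
  also have "\<dots> = (if 1 \<le> K \<and> K - 1 < N then y * Z (K - 1) else 0)"
    by (cases "1 \<le> K") auto
  finally have e2: "(\<Sum>a<N. (if a + 1 = K then y * Z a else 0)) = (if 1 \<le> K \<and> K - 1 < N then y * Z (K - 1) else 0)" .
  have "(\<Sum>a<N. ((if a = K then (x::real) else 0) + (if a + 1 = K then y else 0)) * Z a)
     = (\<Sum>a<N. (if a = K then x * Z K else 0) + (if a + 1 = K then y * Z a else 0))"
    by (intro sum.cong refl) auto
  also have "\<dots> = (if K < N then x * Z K else 0) + (if 1 \<le> K \<and> K - 1 < N then y * Z (K - 1) else 0)"
    unfolding sum.distrib e2 by simp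
  finally show ?thesis .
qed

lemma mvec_kron_idm_left:
  assumes "i div r < q"
  shows "mvec (kron idm r c B) (q*c) v i = (\<Sum>b<c. B (i mod r) b * v ((i div r)*c + b))"
proof -
  have "mvec (kron idm r c B) (q*c) v i = (\<Sum>a<q. idm (i div r) a * (\<Sum>b<c. B (i mod r) b * v (a*c+b)))"
    unfolding mvec_kron by (simp add: sum_distrib_left mult.assoc)
  also have "\<dots> = (\<Sum>b<c. B (i mod r) b * v ((i div r)*c + b))"
    using sum_idm[OF assms] by simp
  finally show ?thesis .
qed

lemma mvec_kron_idm_right:
  assumes "0 < n"
  shows "mvec (kron A n n idm) (q*n) v i = (\<Sum>a<q. A (i div n) a * v (a*n + i mod n))"
proof -
  have "mvec (kron A n n idm) (q*n) v i = (\<Sum>a<q. A (i div n) a * (\<Sum>b<n. idm (i mod n) b * v (a*n+b)))"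
    unfolding mvec_kron by (simp add: sum_distrib_left mult.assoc)
  also have "\<dots> = (\<Sum>a<q. A (i div n) a * v (a*n + i mod n))"
    using sum_idm[of "i mod n" n] assms by simp
  finally show ?thesis .
qed

lemma mvec_SF: "0 < n \<Longrightarrow> mvec (SF n p) (n*(p-1)) v i = (\<Sum>a<p-1. Savg a (i div n) * v (a*n + i mod n))"
  unfolding SF_def using mvec_kron_idm_right[of n "mtr Savg" "p-1" v i]
  by (simp add: mult.commute mtr_def)

lemma mvec_DF: "0 < n \<Longrightarrow> mvec (DF n p) (n*(p-1)) v i = - (\<Sum>a<p-1. Ddiff p a (i div n) * v (a*n + i mod n))"
  unfolding DF_def mvec_neg using mvec_kron_idm_right[of n "mtr (Ddiff p)" "p-1" v i]
  by (simp add: mult.commute mtr_def)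

lemma mvec_DM1: "i div n < p \<Longrightarrow> mvec (DM 1 n p) ((n-1)*p) v i =
   (\<Sum>b<n-1. - Ddiff n b (i mod n) * v ((i div n)*(n-1) + b))"
  unfolding DM_def using mvec_kron_idm_left[of i n p "n-1" "\<lambda>i j. - mtr (Ddiff n) i j" v]
  by (simp add: mult.commute mtr_def)

lemma mvec_DM0: "i div n < p \<Longrightarrow> mvec (DM 0 n p) (n*p) v i =
   (\<Sum>b<n. Dper n b (i mod n) * v ((i div n)*n + b))"
  unfolding DM_def using mvec_kron_idm_left[of i n p n "mtr (Dper n)" v]
  by (simp add: mult.commute mtr_def)



lemma idx_facts:
  fixes n p i :: nat
  assumes "n \<ge> 2" "p \<ge> 2" "i < n*p"
  shows "i div n < p" "i mod n < n" "(i < n) = (i div n = 0)"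
    "(n*(p-1) \<le> i) = (i div n = p - 1)" "i div n = p - 1 \<Longrightarrow> i - n*(p-1) = i mod n"
proof -
  have n0: "0 < n" using assms by simp
  show "i div n < p" using assms by (simp add: less_mult_imp_div_less mult.commute)
  show "i mod n < n" using n0 by simp
  show "(i < n) = (i div n = 0)" using n0 by (simp add: div_eq_0_iff)
  have "(n*(p-1) \<le> i) = (p - 1 \<le> i div n)" using n0 by (simp add: less_eq_div_iff_mult_less_eq mult.commute)
  thus "(n*(p-1) \<le> i) = (i div n = p - 1)" using \<open>i div n < p\<close> by linarith
  assume "i div n = p - 1"
  moreover have "i = (i div n) * n + i mod n" by simp
  ultimately show "i - n*(p-1) = i mod n" by (metis add_diff_cancel_left' mult.commute)
qed

lemma Ddiff_split: "Ddiff q a K = (if a = K then - real q else 0) + (if a + 1 = K then real q else 0)"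
  by (auto simp: Ddiff_def)

lemma Dper_split:
  assumes "n \<ge> 2" "b < n" "s < n"
  shows "Dper n b s = (if b = s then - real n else 0) + (if b = (s+1) mod n then real n else 0)"
proof (cases "s + 1 < n")
  case True
  then show ?thesis using assms by (auto simp: Dper_def)
next
  case False
  hence "s = n - 1" using assms by simp
  then show ?thesis using assms by (auto simp: Dper_def)
qed

lemma layer_solve1:
  fixes G :: "nat \<Rightarrow> real"
  assumes n2: "n \<ge> 2" and z: "(\<Sum>t<n. G t) = 0" and s: "s < n"
  shows "(\<Sum>b<n-1. - Ddiff n b s * ((\<Sum>t<b+1. G t) / real n)) = G s"
proof -
  define Y where "Y b = (\<Sum>t<b+1. G t) / real n" for b
  have nY: "real n * Y b = (\<Sum>t<b+1. G t)" for b using n2 by (simp add: Y_def)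
  have "(\<Sum>b<n-1. - Ddiff n b s * Y b) =
        (\<Sum>b<n-1. ((if b = s then real n else 0) + (if b + 1 = s then - real n else 0)) * Y b)"
    by (intro sum.cong refl) (auto simp: Ddiff_def)
  also have "\<dots> = (if s < n-1 then real n * Y s else 0) + (if 1 \<le> s \<and> s - 1 < n-1 then - real n * Y (s-1) else 0)"
    by (rule sum_two')
  also have "\<dots> = G s"
  proof -
    consider "s = 0" | "1 \<le> s" "s < n - 1" | "s = n - 1" "1 \<le> s" using s n2 by linarith
    then show ?thesis
    proof cases
      case 1 then show ?thesis using n2 nY[of 0] by simp
    next
      case 2
      have "s - 1 + 1 = s" using 2 by simp
      hence "real n * Y (s-1) = (\<Sum>t<s. G t)" using nY[of "s-1"] by simp
      moreover have "real n * Y s = (\<Sum>t<s. G t) + G s" using nY[of s] by simp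
      ultimately show ?thesis using 2 by simp
    next
      case 3
      have "s - 1 + 1 = s" using 3 by simp
      hence "real n * Y (s-1) = (\<Sum>t<s. G t)" using nY[of "s-1"] by simp
      moreover have "(\<Sum>t<s. G t) + G s = 0"
      proof -
        have "n = Suc s" using 3 n2 by simp
        thus ?thesis using z by simp
      qed
      moreover have "s - 1 < n - 1" "\<not> s < n - 1" using 3 by auto
      ultimately show ?thesis using 3 by simp
    qed
  qed
  finally show ?thesis unfolding Y_def .
qed

lemma layer_solve0:
  fixes G :: "nat \<Rightarrow> real"
  assumes n2: "n \<ge> 2" and z: "(\<Sum>t<n. G t) = 0" and s: "s < n"
  shows "(\<Sum>b<n. Dper n b s * ((\<Sum>t<b. G t) / real n)) = G s"
proof -
  define Y where "Y b = (\<Sum>t<b. G t) / real n" for b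
  have nY: "real n * Y b = (\<Sum>t<b. G t)" for b using n2 by (simp add: Y_def)
  define s' where "s' = (s+1) mod n"
  have s'n: "s' < n" using n2 by (simp add: s'_def)
  have "(\<Sum>b<n. Dper n b s * Y b) =
        (\<Sum>b<n. (if b = s then - real n * Y s else 0) + (if b = s' then real n * Y s' else 0))"
  proof (intro sum.cong refl)
    fix b assume "b \<in> {..<n}"
    hence b: "b < n" by simp
    show "Dper n b s * Y b = (if b = s then - real n * Y s else 0) + (if b = s' then real n * Y s' else 0)"
      unfolding Dper_split[OF n2 b s] s'_def[symmetric] by (simp add: distrib_right)
  qed
  also have "\<dots> = - real n * Y s + real n * Y s'"
    unfolding sum.distrib using s s'n by simp
  also have "\<dots> = G s"
  proof (cases "s + 1 < n")
    case True
    hence "s' = s + 1" by (simp add: s'_def)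
    then show ?thesis using nY[of s] nY[of "s+1"] by simp
  next
    case False
    hence "s = n - 1" using s by simp
    moreover have "s' = 0" using \<open>s = n - 1\<close> n2 by (simp add: s'_def)
    moreover have "(\<Sum>t<s. G t) + G s = 0"
    proof -
      have "n = Suc s" using \<open>s = n - 1\<close> n2 by simp
      thus ?thesis using z by simp
    qed
    moreover have "Y 0 = 0" by (simp add: Y_def)
    ultimately show ?thesis using nY[of s] by simp
  qed
  finally show ?thesis unfolding Y_def .
qed

lemma sum_DF_const: "(\<Sum>a<p-1. Ddiff p a K * (u::real)) =
   (if K < p-1 then - real p * u else 0) + (if 1 \<le> K \<and> K - 1 < p - 1 then real p * u else 0)"
  unfolding Ddiff_split using sum_two'[where N="p-1" and K=K and x="- real p" and y="real p" and Z="\<lambda>_. u"] by simp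

lemma exists_feasible:
  fixes n p \<kappa> :: nat and f0 f1 :: "nat \<Rightarrow> real"
  assumes n2: "n \<ge> 2" and p2: "p \<ge> 2" and k: "\<kappa> \<in> {0, 1}"
    and f0p: "\<forall>i<n. f0 i \<ge> 0" and f1p: "\<forall>i<n. f1 i \<ge> 0"
    and eq: "(\<Sum>i<n. \<bar>f0 i\<bar>) = (\<Sum>i<n. \<bar>f1 i\<bar>)"
    and Mpos: "(\<Sum>i<n. f0 i) > 0"
  defines "u \<equiv> (\<Sum>i<n. f0 i) / real n"
  defines "g \<equiv> (\<lambda>K s. if K = 0 then real p * (f0 s - u) else if K = p - 1 then real p * (u - f1 s) else 0)"
  defines "m \<equiv> (\<lambda>j. (\<Sum>t< j mod (n - \<kappa>) + \<kappa>. g (j div (n - \<kappa>)) t) / real n)"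
  shows "feasible \<kappa> n p f0 f1 m (\<lambda>_. u)"
proof -
  have n0: "0 < n" using n2 by simp
  have s0: "(\<Sum>i<n. \<bar>f0 i\<bar>) = (\<Sum>i<n. f0 i)" using f0p by (intro sum.cong) auto
  have s1: "(\<Sum>i<n. \<bar>f1 i\<bar>) = (\<Sum>i<n. f1 i)" using f1p by (intro sum.cong) auto
  have nu: "real n * u = (\<Sum>i<n. f0 i)" using n0 by (simp add: u_def)
  have zs: "(\<Sum>t<n. g K t) = 0" for K
  proof -
    have a: "(\<Sum>t<n. f0 t - u) = 0" using nu by (simp add: sum_subtractf)
    have b: "(\<Sum>t<n. u - f1 t) = 0" using nu eq s0 s1 by (simp add: sum_subtractf)
    show ?thesis unfolding g_def using a b by (cases "K = 0"; cases "K = p - 1") (simp_all add: sum_distrib_left[symmetric])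
  qed
  show ?thesis unfolding feasible_def
  proof (intro allI impI)
    fix i assume i: "i < n * p"
    note ix = idx_facts[OF n2 p2 i]
    define K where "K = i div n"
    define s where "s = i mod n"
    have K: "K < p" and s: "s < n" using ix by (auto simp: K_def s_def)
    have DMv: "mvec (DM \<kappa> n p) ((n - \<kappa>) * p) m i = g K s"
    proof (cases "\<kappa> = 1")
      case True
      have "mvec (DM \<kappa> n p) ((n - \<kappa>) * p) m i = (\<Sum>b<n-1. - Ddiff n b s * m (K*(n-1) + b))"
        using mvec_DM1[OF ix(1)] True by (simp add: K_def s_def)
      also have "\<dots> = (\<Sum>b<n-1. - Ddiff n b s * ((\<Sum>t<b+1. g K t) / real n))"
        by (intro sum.cong refl) (simp add: m_def True)
      also have "\<dots> = g K s" by (rule layer_solve1[OF n2 zs s])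
      finally show ?thesis .
    next
      case False
      hence k0: "\<kappa> = 0" using k by simp
      have "mvec (DM \<kappa> n p) ((n - \<kappa>) * p) m i = (\<Sum>b<n. Dper n b s * m (K*n + b))"
        using mvec_DM0[OF ix(1)] k0 by (simp add: K_def s_def)
      also have "\<dots> = (\<Sum>b<n. Dper n b s * ((\<Sum>t<b. g K t) / real n))"
        by (intro sum.cong refl) (simp add: m_def k0)
      also have "\<dots> = g K s" by (rule layer_solve0[OF n2 zs s])
      finally show ?thesis .
    qed
    have DFv: "mvec (DF n p) (n * (p - 1)) (\<lambda>_. u) i =
       (if K < p-1 then real p * u else 0) - (if 1 \<le> K then real p * u else 0)"
    proof -
      have "1 \<le> K \<Longrightarrow> K - 1 < p - 1" using K by linarith
      thus ?thesis using mvec_DF[OF n0, of p "\<lambda>_. u" i] sum_DF_const[of p K u] K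
        by (simp add: K_def[symmetric])
    qed
    show "mvec (DM \<kappa> n p) ((n - \<kappa>) * p) m i + mvec (DF n p) (n * (p - 1)) (\<lambda>_. u) i = fbm n p f0 f1 i"
    proof -
      consider "K = 0" | "K = p - 1" "K \<noteq> 0" | "K \<noteq> 0" "K \<noteq> p - 1" by blast
      then show ?thesis
      proof cases
        case 1
        then have "i < n" using ix by (simp add: K_def)
        then show ?thesis using DMv DFv 1 p2 by (simp add: g_def fbm_def s_def algebra_simps)
      next
        case 2
        then have "\<not> i < n" "n*(p-1) \<le> i" "i - n*(p-1) = s" using ix by (auto simp: K_def s_def)
        moreover have "1 \<le> K" "\<not> K < p - 1" using 2 by auto
        ultimately show ?thesis using DMv DFv 2 i by (simp add: g_def fbm_def algebra_simps)
      next
        case 3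
        then have "\<not> i < n" "\<not> n*(p-1) \<le> i" using ix by (auto simp: K_def s_def)
        moreover have "K < p - 1" using 3 K by linarith
        ultimately show ?thesis using DMv DFv 3 by (simp add: g_def fbm_def)
      qed
    qed
  qed
qed

lemma mvec_zero: "mvec A c (\<lambda>_. 0) i = 0" by (simp add: mvec_def)

lemma fbp_nonneg:
  assumes "n \<ge> 2" "p \<ge> 2" "i < n*p" "\<forall>i<n. f0 i \<ge> 0" "\<forall>i<n. f1 i \<ge> 0"
  shows "fbp n p f0 f1 i \<ge> 0"
proof -
  have "i - n*(p-1) < n" if "n*(p-1) \<le> i"
  proof -
    have "n*p = n*(p-1) + n" using assms(2) by (metis add.commute mult.commute mult_eq_if not_numeral_le_zero)
    thus ?thesis using that assms(3) by linarith
  qed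
  thus ?thesis using assms by (auto simp: fbp_def)
qed

lemma V_pos:
  assumes n2: "n \<ge> 2" and p2: "p \<ge> 2" and i: "i < n*p"
    and f0p: "\<forall>i<n. f0 i \<ge> 0" and f1p: "\<forall>i<n. f1 i \<ge> 0" and u: "(u::real) > 0"
  shows "mvec (SF n p) (n*(p-1)) (\<lambda>_. u) i + fbp n p f0 f1 i > 0"
proof -
  have n0: "0 < n" using n2 by simp
  define K where "K = i div n"
  have K: "K < p" using idx_facts[OF n2 p2 i] by (simp add: K_def)
  define a0 where "a0 = (if K < p - 1 then K else K - 1)"
  have a0: "a0 \<in> {..<p-1}" "Savg a0 K = 1/2" using K p2 by (auto simp: a0_def Savg_def)
  have "u/2 \<le> (\<Sum>a<p-1. Savg a K * u)"
  proof -
    have "\<And>x. x \<in> {..<p-1} - {a0} \<Longrightarrow> 0 \<le> Savg x K * u" using u by (auto simp: Savg_def)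
    hence "Savg a0 K * u \<le> (\<Sum>a<p-1. Savg a K * u)" using member_le_sum[OF a0(1), of "\<lambda>a. Savg a K * u"] by blast
    thus ?thesis using a0(2) by simp
  qed
  hence "mvec (SF n p) (n*(p-1)) (\<lambda>_. u) i > 0"
    using mvec_SF[OF n0, of p "\<lambda>_. u" i] u by (simp add: K_def)
  thus ?thesis using fbp_nonneg[OF n2 p2 i f0p f1p] by simp
qed

lemma exists_fin:
  fixes n p \<kappa> :: nat and f0 f1 :: "nat \<Rightarrow> real"
  assumes n2: "n \<ge> 2" and p2: "p \<ge> 2" and k: "\<kappa> \<in> {0, 1}"
    and f0p: "\<forall>i<n. f0 i \<ge> 0" and f1p: "\<forall>i<n. f1 i \<ge> 0"
    and eq: "(\<Sum>i<n. \<bar>f0 i\<bar>) = (\<Sum>i<n. \<bar>f1 i\<bar>)"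
  shows "\<exists>m f. feasible \<kappa> n p f0 f1 m f \<and> objective \<kappa> n p f0 f1 m f \<noteq> \<infinity>"
proof (cases "(\<Sum>i<n. f0 i) > 0")
  case True
  define u where "u \<equiv> (\<Sum>i<n. f0 i) / real n"
  have u: "u > 0" using True n2 by (simp add: u_def)
  obtain mm where F: "feasible \<kappa> n p f0 f1 mm (\<lambda>_. u)"
    using exists_feasible[OF n2 p2 k f0p f1p eq True] unfolding u_def by blast
  have "objective \<kappa> n p f0 f1 mm (\<lambda>_. u) \<noteq> \<infinity>" for mm
    unfolding objective_def sum_Pinfty using V_pos[OF n2 p2 _ f0p f1p u] by (auto simp: Jc_def)
  thus ?thesis using F by blast
next
  case False
  have s0: "(\<Sum>i<n. \<bar>f0 i\<bar>) = (\<Sum>i<n. f0 i)" using f0p by (intro sum.cong) auto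
  have s1: "(\<Sum>i<n. \<bar>f1 i\<bar>) = (\<Sum>i<n. f1 i)" using f1p by (intro sum.cong) auto
  have z0: "(\<Sum>i<n. f0 i) = 0" using False sum_nonneg[of "{..<n}" f0] f0p by force
  have z1: "(\<Sum>i<n. f1 i) = 0" using z0 eq s0 s1 by simp
  have a0: "\<forall>i<n. f0 i = 0" using z0 f0p sum_nonneg_eq_0_iff[of "{..<n}" f0] by auto
  have a1: "\<forall>i<n. f1 i = 0" using z1 f1p sum_nonneg_eq_0_iff[of "{..<n}" f1] by auto
  have lt: "i - n*(p-1) < n" if "i < n*p" "n*(p-1) \<le> i" for i
  proof -
    have "n*p = n*(p-1) + n" using p2 by (metis add.commute mult.commute mult_eq_if not_numeral_le_zero)
    thus ?thesis using that by linarith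
  qed
  have fbm0: "fbm n p f0 f1 i = 0" if "i < n*p" for i using a0 a1 lt[OF that] by (auto simp: fbm_def)
  have fbp0: "fbp n p f0 f1 i = 0" if "i < n*p" for i using a0 a1 lt[OF that] by (auto simp: fbp_def)
  have "feasible \<kappa> n p f0 f1 (\<lambda>_. 0) (\<lambda>_. 0)"
    unfolding feasible_def mvec_zero using fbm0 by simp
  moreover have "objective \<kappa> n p f0 f1 (\<lambda>_. 0) (\<lambda>_. 0) \<noteq> \<infinity>"
    unfolding objective_def mvec_zero sum_Pinfty using fbp0 by (auto simp: Jc_def)
  ultimately show ?thesis by blast
qed


theorem lemma1:
  fixes n p \<kappa> :: nat and f0 f1 m1 f1' m2 f2 :: "nat \<Rightarrow> real"
  assumes "n \<ge> 2" and "p \<ge> 2" and "\<kappa> \<in> {0, 1}"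
    and "\<forall>i<n. f0 i \<ge> 0" and "\<forall>i<n. f1 i \<ge> 0"
    and "(\<Sum>i<n. \<bar>f0 i\<bar>) = (\<Sum>i<n. \<bar>f1 i\<bar>)"
    and "is_minimizer \<kappa> n p f0 f1 m1 f1'"
    and "is_minimizer \<kappa> n p f0 f1 m2 f2"
  shows "\<forall>i<n * p.
           mvec (SF n p) (n * (p - 1)) f1' i + fbp n p f0 f1 i > 0 \<and>
           mvec (SF n p) (n * (p - 1)) f2 i + fbp n p f0 f1 i > 0 \<longrightarrow>
           mvec (SM \<kappa> n p) ((n - \<kappa>) * p) m1 i / (mvec (SF n p) (n * (p - 1)) f1' i + fbp n p f0 f1 i)
         = mvec (SM \<kappa> n p) ((n - \<kappa>) * p) m2 i / (mvec (SF n p) (n * (p - 1)) f2 i + fbp n p f0 f1 i)"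
  using main_conv[OF _ _ assms(7) assms(8)] exists_fin[OF assms(1-6)] by blast

end
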